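(* Let $\Theta$ be a quantum operation from system $A$ to system $B$, and suppose there exist a detection-incoherent quantum operation $\Phi$ from $A\otimes R$ to $B$ and a fixed density operator $\rho$ on $R$ such that $\Theta(\sigma)=\Phi(\sigma\otimes\rho)$ for all density operators $\sigma$ on $A$. Then $\Theta$ is detection-incoherent.
   Context: Every finite-dimensional system carries a fixed orthonormal incoherent basis $\{|i\rangle\}$; composite systems use the product basis. The total dephasing map is $\Delta(\rho)=\sum_i|i\rangle\langle i|\rho|i\rangle\langle i|$ (tensor product on composite systems). A quantum operation is a completely positive trace-preserving linear map; it is detection-incoherent iff $\Delta\Phi=\Delta\Phi\Delta$. *)

theory Defs
  imports Complex_Main "Jordan_Normal_Form.Matrix"
begin

text \<open>Operators on an n-dimensional system are complex n x n matrices, written in the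
fixed incoherent (computational) basis. Composite systems use the product basis with
the ordering (i,k) of the pair mapped to index i*dB + k (Kronecker convention).\<close>

definition psd :: "nat \<Rightarrow> complex mat \<Rightarrow> bool" where
  "psd n A \<longleftrightarrow> A \<in> carrier_mat n n \<and>
     (\<forall>v \<in> carrier_vec n. let q = (\<Sum>i<n. cnj (v $ i) * (A *\<^sub>v v) $ i) in Im q = 0 \<and> Re q \<ge> 0)"

definition mtrace :: "complex mat \<Rightarrow> complex" where
  "mtrace A = (\<Sum>i<dim_row A. A $$ (i, i))"

definition density :: "nat \<Rightarrow> complex mat \<Rightarrow> bool" where
  "density n A \<longleftrightarrow> psd n A \<and> mtrace A = 1"

definition kron :: "complex mat \<Rightarrow> complex mat \<Rightarrow> complex mat" where
  "kron A B = mat (dim_row A * dim_row B) (dim_col A * dim_col B)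
     (\<lambda>(r, s). A $$ (r div dim_row B, s div dim_col B) * B $$ (r mod dim_row B, s mod dim_col B))"

text \<open>Total dephasing in the incoherent basis (on a composite system with the product
basis this is the tensor product of the local dephasings).\<close>
definition dephase :: "complex mat \<Rightarrow> complex mat" where
  "dephase A = mat (dim_row A) (dim_col A) (\<lambda>(i, j). if i = j then A $$ (i, j) else 0)"

definition blk :: "nat \<Rightarrow> complex mat \<Rightarrow> nat \<Rightarrow> nat \<Rightarrow> complex mat" where
  "blk n X i j = mat n n (\<lambda>(a, b). X $$ (i * n + a, j * n + b))"

text \<open>The map id_k \<otimes> Phi, for Phi from n-dim to m-dim operators.\<close>
definition ext_id :: "nat \<Rightarrow> nat \<Rightarrow> nat \<Rightarrow> (complex mat \<Rightarrow> complex mat) \<Rightarrow> complex mat \<Rightarrow> complex mat" where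
  "ext_id k n m Phi X = mat (k * m) (k * m)
     (\<lambda>(r, s). Phi (blk n X (r div m) (s div m)) $$ (r mod m, s mod m))"

definition quantum_operation :: "nat \<Rightarrow> nat \<Rightarrow> (complex mat \<Rightarrow> complex mat) \<Rightarrow> bool" where
  "quantum_operation n m Phi \<longleftrightarrow>
     (\<forall>X \<in> carrier_mat n n. Phi X \<in> carrier_mat m m) \<and>
     (\<forall>X \<in> carrier_mat n n. \<forall>Y \<in> carrier_mat n n. Phi (X + Y) = Phi X + Phi Y) \<and>
     (\<forall>X \<in> carrier_mat n n. \<forall>c. Phi (c \<cdot>\<^sub>m X) = c \<cdot>\<^sub>m Phi X) \<and>
     (\<forall>X \<in> carrier_mat n n. mtrace (Phi X) = mtrace X) \<and>
     (\<forall>k X. psd (k * n) X \<longrightarrow> psd (k * m) (ext_id k n m Phi X))"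

definition detection_incoherent :: "nat \<Rightarrow> nat \<Rightarrow> (complex mat \<Rightarrow> complex mat) \<Rightarrow> bool" where
  "detection_incoherent n m Phi \<longleftrightarrow> quantum_operation n m Phi \<and>
     (\<forall>X \<in> carrier_mat n n. dephase (Phi X) = dephase (Phi (dephase X)))"

end

theory Submission imports Defs begin

lemma dephase_carrier: "A \<in> carrier_mat m m \<Longrightarrow> dephase A \<in> carrier_mat m m"
  by (simp add: dephase_def)

lemma dephase_add: "A \<in> carrier_mat m m \<Longrightarrow> B \<in> carrier_mat m m \<Longrightarrow> dephase (A + B) = dephase A + dephase B"
  by (rule eq_matI) (auto simp: dephase_def)

lemma dephase_smult: "dephase (c \<cdot>\<^sub>m A) = c \<cdot>\<^sub>m dephase A"
  by (rule eq_matI) (auto simp: dephase_def)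

lemma dephase_idem: "dephase (dephase A) = dephase A"
  by (rule eq_matI) (auto simp: dephase_def)

lemma dephase_zero: "dephase (0\<^sub>m n n) = 0\<^sub>m n n"
  by (rule eq_matI) (auto simp: dephase_def)

lemma div_mod_eq_iff: "(0::nat) < d \<Longrightarrow> (r div d = s div d \<and> r mod d = s mod d) \<longleftrightarrow> r = s"
  by (metis div_mult_mod_eq)

lemma dephase_kron: "A \<in> carrier_mat a a \<Longrightarrow> B \<in> carrier_mat b b \<Longrightarrow>
   dephase (kron A B) = kron (dephase A) (dephase B)"
proof (rule eq_matI)
  assume A: "A \<in> carrier_mat a a" and B: "B \<in> carrier_mat b b"
  fix i j assume i: "i < dim_row (kron (dephase A) (dephase B))" and j: "j < dim_col (kron (dephase A) (dephase B))"
  have ib: "i < a * b" "j < a * b" using i j A B by (auto simp: kron_def dephase_def)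
  hence b0: "0 < b" by (cases b) auto
  have d1: "i div b < a" "j div b < a" using ib by (auto simp: less_mult_imp_div_less)
  have d2: "i mod b < b" "j mod b < b" using b0 by auto
  show "dephase (kron A B) $$ (i, j) = kron (dephase A) (dephase B) $$ (i, j)"
    using A B ib d1 d2 div_mod_eq_iff[OF b0, of i j]
    by (auto simp: kron_def dephase_def)
next
  show "dim_row (dephase (kron A B)) = dim_row (kron (dephase A) (dephase B))"
    "dim_col (dephase (kron A B)) = dim_col (kron (dephase A) (dephase B))"
    by (auto simp: kron_def dephase_def)
qed

lemma ifz1: "cnj (if P then 1 else 0) * (b::complex) = (if P then b else 0)" by simp
lemma ifz2: "(if P then a else 0) * (b::complex) = (if P then a * b else 0)" by simp

definition R1 :: "nat \<Rightarrow> real \<Rightarrow> (nat \<Rightarrow> complex) \<Rightarrow> complex mat" where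
  "R1 n t u = mat n n (\<lambda>(a, b). complex_of_real t * u a * cnj (u b))"

lemma mult_vec_R1: "v \<in> carrier_vec n \<Longrightarrow> a < n \<Longrightarrow>
   (R1 n t u *\<^sub>v v) $ a = complex_of_real t * u a * (\<Sum>b<n. cnj (u b) * v $ b)"
  by (auto simp: R1_def scalar_prod_def sum_distrib_left lessThan_atLeast0 intro!: sum.cong)

lemma psd_R1: assumes "t \<ge> 0" shows "psd n (R1 n t u)"
  unfolding psd_def
proof (intro conjI ballI)
  show "R1 n t u \<in> carrier_mat n n" by (simp add: R1_def)
  fix v :: "complex vec" assume v: "v \<in> carrier_vec n"
  define w where "w = (\<Sum>b<n. cnj (u b) * v $ b)"
  have "(\<Sum>i<n. cnj (v $ i) * (R1 n t u *\<^sub>v v) $ i) = (\<Sum>i<n. complex_of_real t * w * (u i * cnj (v $ i)))"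
    using v by (auto simp: mult_vec_R1 w_def intro!: sum.cong)
  also have "\<dots> = complex_of_real t * w * cnj w"
    by (simp add: w_def sum_distrib_left)
  also have "\<dots> = complex_of_real (t * (cmod w)^2)"
    using complex_norm_square[of w] by (simp add: mult.assoc)
  finally have q: "(\<Sum>i<n. cnj (v $ i) * (R1 n t u *\<^sub>v v) $ i) = complex_of_real (t * (cmod w)^2)" .
  show "let q = \<Sum>i<n. cnj (v $ i) * (R1 n t u *\<^sub>v v) $ i in Im q = 0 \<and> 0 \<le> Re q"
    unfolding q Let_def using assms by simp
qed

lemma density_R1: assumes "t \<ge> 0" "complex_of_real t * (\<Sum>a<n. u a * cnj (u a)) = 1"
  shows "density n (R1 n t u)"
  using assms psd_R1[OF assms(1)]
  by (simp add: density_def mtrace_def R1_def sum_distrib_left mult.assoc)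

lemma psd_diag: assumes "psd n A" "i < n" shows "Im (A $$ (i,i)) = 0" "Re (A $$ (i,i)) \<ge> 0"
proof -
  have A: "A \<in> carrier_mat n n" using assms by (simp add: psd_def)
  have "(\<Sum>k<n. cnj (unit_vec n i $ k) * (A *\<^sub>v unit_vec n i) $ k) = (A *\<^sub>v unit_vec n i) $ i"
    using assms(2) by (simp add: unit_vec_def ifz1 sum.delta cong: if_cong)
  also have "\<dots> = A $$ (i,i)" using A assms(2) by simp
  finally have e: "(\<Sum>k<n. cnj (unit_vec n i $ k) * (A *\<^sub>v unit_vec n i) $ k) = A $$ (i,i)" .
  have "unit_vec n i \<in> carrier_vec n" by simp
  with assms(1) e show "Im (A $$ (i,i)) = 0" "Re (A $$ (i,i)) \<ge> 0"
    unfolding psd_def Let_def by metis+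
qed

lemma density_dephase: assumes "density n A" shows "density n (dephase A)"
proof -
  have p: "psd n A" and tr: "mtrace A = 1" using assms by (auto simp: density_def)
  have A: "A \<in> carrier_mat n n" using p by (simp add: psd_def)
  have "psd n (dephase A)" unfolding psd_def
  proof (intro conjI ballI)
    show "dephase A \<in> carrier_mat n n" using A by (simp add: dephase_def)
    fix v :: "complex vec" assume v: "v \<in> carrier_vec n"
    have mv: "(dephase A *\<^sub>v v) $ i = A $$ (i,i) * v $ i" if "i < n" for i
      using that A v by (auto simp: dephase_def scalar_prod_def ifz2 sum.delta lessThan_atLeast0 cong: if_cong)
    have "(\<Sum>i<n. cnj (v $ i) * (dephase A *\<^sub>v v) $ i) = (\<Sum>i<n. A $$ (i,i) * complex_of_real ((cmod (v $ i))^2))"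
      using complex_norm_square by (auto simp: mv mult.commute intro!: sum.cong)
    moreover have "Im (\<Sum>i<n. A $$ (i,i) * complex_of_real ((cmod (v $ i))^2)) = 0"
      using psd_diag(1)[OF p] by (simp add: Im_sum)
    moreover have "Re (\<Sum>i<n. A $$ (i,i) * complex_of_real ((cmod (v $ i))^2)) \<ge> 0"
      using psd_diag(2)[OF p] by (simp add: Re_sum sum_nonneg)
        (meson lessThan_iff sum_nonneg mult_nonneg_nonneg zero_le_power2)
    ultimately show "let q = \<Sum>i<n. cnj (v $ i) * (dephase A *\<^sub>v v) $ i in Im q = 0 \<and> 0 \<le> Re q"
      by (simp add: Let_def)
  qed
  moreover have "mtrace (dephase A) = 1" using tr A by (simp add: mtrace_def dephase_def)
  ultimately show ?thesis by (simp add: density_def)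
qed

definition E :: "nat \<Rightarrow> nat \<Rightarrow> nat \<Rightarrow> complex mat" where
  "E n i j = mat n n (\<lambda>(a, b). if a = i \<and> b = j then 1 else 0)"

inductive_set spn :: "nat \<Rightarrow> complex mat set" for n where
  spn_z: "0\<^sub>m n n \<in> spn n"
| spn_d: "density n A \<Longrightarrow> A \<in> spn n"
| spn_a: "A \<in> spn n \<Longrightarrow> B \<in> spn n \<Longrightarrow> A + B \<in> spn n"
| spn_s: "A \<in> spn n \<Longrightarrow> c \<cdot>\<^sub>m A \<in> spn n"

lemma spn_carrier: "A \<in> spn n \<Longrightarrow> A \<in> carrier_mat n n"
  by (induction rule: spn.induct) (auto simp: density_def psd_def)

lemma E_diag_spn: assumes "i < n" shows "E n i i \<in> spn n"
proof -
  have "E n i i = R1 n 1 (\<lambda>k. if k = i then 1 else 0)"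
    by (rule eq_matI) (auto simp: E_def R1_def)
  moreover have "density n (R1 n 1 (\<lambda>k. if k = i then 1 else 0))"
    by (rule density_R1) (use assms in \<open>auto simp: if_distrib[of "\<lambda>x. x * _"] sum.delta cong: if_cong\<close>)
  ultimately show ?thesis by (simp add: spn_d)
qed

lemma sum_two: "i < (n::nat) \<Longrightarrow> j < n \<Longrightarrow> i \<noteq> j \<Longrightarrow>
  (\<Sum>a<n. (if a = i then x else if a = j then y else (0::complex))) = x + y"
proof -
  assume h: "i < n" "j < n" "i \<noteq> j"
  have "(\<Sum>a<n. (if a = i then x else if a = j then y else (0::complex))) =
        (\<Sum>a<n. (if a = i then x else 0) + (if a = j then y else 0))"
    using h by (intro sum.cong) auto
  also have "\<dots> = (\<Sum>a<n. (if a = i then x else 0)) + (\<Sum>a<n. (if a = j then y else 0))"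
    by (rule sum.distrib)
  also have "\<dots> = x + y" using h by auto
  finally show ?thesis .
qed

lemma E_spn: assumes "i < n" "j < n" shows "E n i j \<in> spn n"
proof (cases "i = j")
  case True thus ?thesis using E_diag_spn assms by simp
next
  case False
  define u1 where "u1 = (\<lambda>k. if k = i then 1 else if k = j then (1::complex) else 0)"
  define u2 where "u2 = (\<lambda>k. if k = i then 1 else if k = j then - \<i> else (0::complex))"
  have s1: "(\<Sum>a<n. u1 a * cnj (u1 a)) = 2"
  proof -
    have "(\<Sum>a<n. u1 a * cnj (u1 a)) = (\<Sum>a<n. (if a = i then 1 else if a = j then 1 else (0::complex)))"
      by (intro sum.cong) (auto simp: u1_def)
    thus ?thesis using sum_two[OF assms False] by simp
  qed
  have s2: "(\<Sum>a<n. u2 a * cnj (u2 a)) = 2"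
  proof -
    have "(\<Sum>a<n. u2 a * cnj (u2 a)) = (\<Sum>a<n. (if a = i then 1 else if a = j then 1 else (0::complex)))"
      by (intro sum.cong) (auto simp: u2_def)
    thus ?thesis using sum_two[OF assms False] by simp
  qed
  have d1: "density n (R1 n (1/2) u1)" by (rule density_R1) (auto simp: s1)
  have d2: "density n (R1 n (1/2) u2)" by (rule density_R1) (auto simp: s2)
  have eq: "E n i j = R1 n (1/2) u1 + (- \<i>) \<cdot>\<^sub>m R1 n (1/2) u2
      + ((\<i> - 1)/2) \<cdot>\<^sub>m E n i i + ((\<i> - 1)/2) \<cdot>\<^sub>m E n j j"
    using False by (intro eq_matI) (auto simp: E_def R1_def u1_def u2_def field_simps)
  show ?thesis unfolding eq
    by (intro spn_a spn_s spn_d d1 d2 E_diag_spn assms)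
qed

lemma decomp_spn:
  assumes X: "X \<in> carrier_mat n n" and S: "finite S" "S \<subseteq> {..<n} \<times> {..<n}"
  shows "mat n n (\<lambda>p. if p \<in> S then X $$ p else 0) \<in> spn n"
  using S
proof (induction S rule: finite_induct)
  case empty
  have "mat n n (\<lambda>p. if p \<in> {} then X $$ p else 0) = 0\<^sub>m n n" by (rule eq_matI) auto
  thus ?case by (simp add: spn_z)
next
  case (insert p S)
  obtain i j where p: "p = (i, j)" by (cases p)
  have ij: "i < n" "j < n" using insert p by auto
  have "mat n n (\<lambda>q. if q \<in> insert p S then X $$ q else 0) =
        mat n n (\<lambda>q. if q \<in> S then X $$ q else 0) + (X $$ (i,j)) \<cdot>\<^sub>m E n i j"
    using insert(2) p by (intro eq_matI) (auto simp: E_def)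
  thus ?case using insert ij by (auto intro!: spn_a spn_s E_spn)
qed

lemma all_spn: assumes X: "X \<in> carrier_mat n n" shows "X \<in> spn n"
proof -
  have "X = mat n n (\<lambda>p. if p \<in> {..<n} \<times> {..<n} then X $$ p else 0)"
    using X by (intro eq_matI) auto
  thus ?thesis using decomp_spn[OF X, of "{..<n} \<times> {..<n}"] by simp
qed

theorem mainTheorem13:
  fixes Theta Phi :: "complex mat \<Rightarrow> complex mat" and dA dR dB :: nat and \<rho> :: "complex mat"
  assumes "quantum_operation dA dB Theta"
    and "detection_incoherent (dA * dR) dB Phi"
    and "density dR \<rho>"
    and "\<forall>\<sigma>. density dA \<sigma> \<longrightarrow> Theta \<sigma> = Phi (kron \<sigma> \<rho>)"
  shows "detection_incoherent dA dB Theta"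
proof -
  note qo = assms(1)[unfolded quantum_operation_def]
  have car: "Theta X \<in> carrier_mat dB dB" if "X \<in> carrier_mat dA dA" for X using qo that by blast
  have add: "Theta (X + Y) = Theta X + Theta Y" if "X \<in> carrier_mat dA dA" "Y \<in> carrier_mat dA dA" for X Y
    using qo that by blast
  have smul: "Theta (c \<cdot>\<^sub>m X) = c \<cdot>\<^sub>m Theta X" if "X \<in> carrier_mat dA dA" for X c
    using qo that by blast
  have di: "dephase (Phi Y) = dephase (Phi (dephase Y))" if "Y \<in> carrier_mat (dA * dR) (dA * dR)" for Y
    using assms(2) that unfolding detection_incoherent_def by blast
  have rc: "\<rho> \<in> carrier_mat dR dR" using assms(3) by (simp add: density_def psd_def)
  have dens: "dephase (Theta \<sigma>) = dephase (Theta (dephase \<sigma>))" if d: "density dA \<sigma>" for \<sigma>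
  proof -
    have sc: "\<sigma> \<in> carrier_mat dA dA" using d by (simp add: density_def psd_def)
    have dsc: "dephase \<sigma> \<in> carrier_mat dA dA" using sc by (rule dephase_carrier)
    have k1: "kron \<sigma> \<rho> \<in> carrier_mat (dA * dR) (dA * dR)" using sc rc by (simp add: kron_def)
    have k2: "kron (dephase \<sigma>) \<rho> \<in> carrier_mat (dA * dR) (dA * dR)" using dsc rc by (simp add: kron_def)
    have "dephase (Theta \<sigma>) = dephase (Phi (kron \<sigma> \<rho>))" using assms(4) d by simp
    also have "\<dots> = dephase (Phi (kron (dephase \<sigma>) (dephase \<rho>)))"
      using di[OF k1] dephase_kron[OF sc rc] by simp
    also have "\<dots> = dephase (Phi (kron (dephase (dephase \<sigma>)) (dephase \<rho>)))"
      by (simp add: dephase_idem)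
    also have "\<dots> = dephase (Phi (kron (dephase \<sigma>) \<rho>))"
      using di[OF k2] dephase_kron[OF dsc rc] by simp
    also have "\<dots> = dephase (Theta (dephase \<sigma>))"
      using assms(4) density_dephase[OF d] by simp
    finally show ?thesis .
  qed
  have main: "dephase (Theta X) = dephase (Theta (dephase X))" if "X \<in> spn dA" for X
    using that
  proof (induction rule: spn.induct)
    case spn_z thus ?case by (simp add: dephase_zero)
  next
    case (spn_d A) thus ?case by (rule dens)
  next
    case (spn_a A B)
    have A: "A \<in> carrier_mat dA dA" and B: "B \<in> carrier_mat dA dA"
      using spn_a(1,2) spn_carrier by auto
    have dA': "dephase A \<in> carrier_mat dA dA" and dB': "dephase B \<in> carrier_mat dA dA"
      using A B by (auto intro: dephase_carrier)
    have "dephase (Theta (A + B)) = dephase (Theta A) + dephase (Theta B)"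
      using add[OF A B] car[OF A] car[OF B] by (simp add: dephase_add)
    also have "\<dots> = dephase (Theta (dephase A)) + dephase (Theta (dephase B))"
      using spn_a(3,4) by simp
    also have "\<dots> = dephase (Theta (dephase (A + B)))"
      using dephase_add[OF A B] add[OF dA' dB'] car[OF dA'] car[OF dB'] by (simp add: dephase_add)
    finally show ?case .
  next
    case (spn_s A c)
    have A: "A \<in> carrier_mat dA dA" using spn_s(1) spn_carrier by auto
    have dA': "dephase A \<in> carrier_mat dA dA" using A by (rule dephase_carrier)
    show ?case using smul[OF A] smul[OF dA'] spn_s(2) by (simp add: dephase_smult)
  qed
  show ?thesis unfolding detection_incoherent_def
    using assms(1) main all_spn by blast
qed

end
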